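(* Consider problem (RCL) as defined in the context, and suppose: (A1) for every $i\in\{1,\dots,m\}$, $\mathcal{D}_{\boldsymbol{X}_i}$ is absolutely continuous with respect to $\mathcal{D}_{\boldsymbol{X}_0}$, and $\mathcal{D}_{\boldsymbol{X}_0}$ is nonatomic; (A2) for each $i\in\{0,\dots,m\}$ and every $\boldsymbol f\in\mathcal F$, the function $(\boldsymbol x,y)\mapsto \ell_i(\boldsymbol f(\boldsymbol x),y)$ belongs to $\mathcal{Z}^i_2=\mathcal{L}_{p'}(\mathcal{D}_i,\mathbb{R})$, and $\mathcal F$ is decomposable. Then for each $i\in\{1,\dots,m\}$ there exist a convex, proper, lower-semicontinuous and positively homogeneous risk measure $\widetilde{\rho}_i:\mathcal{L}_1(\mathcal{D}_{\boldsymbol{X}_0},\mathbb{R})\to\mathbb{R}$ and a function $G_i:\mathbb{R}^k\times\mathbb{R}^d\to\mathbb{R}$ with $G_i(\boldsymbol f(\cdot),\cdot)\in\mathcal{L}_1(\mathcal{D}_{\boldsymbol{X}_0},\mathbb{R})$ for all $\boldsymbol f\in\mathcal F$, such that for every $\boldsymbol f\in\mathcal F$, $$\rho_0\big(\widehat\rho_0(\ell_0(\boldsymbol f(\boldsymbol X_0),Y_0)\mid \boldsymbol X_0)\big)=\rho_0\big(F_0(\boldsymbol f(\boldsymbol X_0),\boldsymbol X_0)\big),$$ $$\rho_i\big(\widehat\rho_i(\ell_i(\boldsymbol f(\boldsymbol X_i),Y_i)\mid \boldsymbol X_i)\big)=\widetilde\rho_i\big(G_i(\boldsymbol f(\boldsymbol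 X_0),\boldsymbol X_0)\big),\quad i=1,\dots,m.$$ Consequently (RCL) is equivalent to the problem $$\min_{\boldsymbol f\in\mathcal F}\ \rho_0\big(F_0(\boldsymbol f(\boldsymbol X_0),\boldsymbol X_0)\big)\quad\text{s.t.}\quad \widetilde\rho_i\big(G_i(\boldsymbol f(\boldsymbol X_0),\boldsymbol X_0)\big)\le c_i,\ i=1,\dots,m,$$ in which all risk terms are evaluated on functions of the single random vector $\boldsymbol X_0$ with distribution $\mathcal D_{\boldsymbol X_0}$.
   Context: Let $(\Omega,\mathscr F,\mu)$ be a complete probability space. For $i\in\{0,1,\dots,m\}$, let $(\boldsymbol X_i,Y_i):\Omega\to\mathbb R^d\times\mathbb R$ be random pairs with Borel distributions $\mathcal D_i$ on $\mathbb R^d\times\mathbb R$; $\mathcal D_{\boldsymbol X_i}$ denotes the marginal of $\boldsymbol X_i$ and $\mathcal D_{Y_i|\boldsymbol X_i}$ the conditional distribution of $Y_i$ given $\boldsymbol X_i$. A measure $P$ is nonatomic if every event $E$ with $P(E)>0$ contains an event $E'$ with $P(E)>P(E')>0$. Conditional risk mappings: fix $p,p'\in[1,\infty]$ and set $\mathcal Z^i_1=\mathcal L_p(\Omega,\sigma(\boldsymbol X_i),\mu;\mathbb R)$, $\mathcal Z^i_2=\mathcal L_{p'}(\mathcal D_i,\mathbb R)$, $\mathcal Z^i_3=\mathcal L_{p'}(\mathcal D_{Y_i|\boldsymbol X_i},\mathbb R)$. A conditional risk mapping is a map $\widehat\rho(\cdot\mid\boldsymbol X_i):\mathcal Z^i_2\to\mathcal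 Z^i_1$ such that for every Borel $Z:\mathbb R^{d+1}\to\mathbb R$ in $\mathcal Z^i_2$ and every $\omega\in\Omega$, $\widehat\rho(Z(\boldsymbol X_i,Y_i)\mid\boldsymbol X_i)(\omega)=\widehat\rho(Z(\boldsymbol x,Y_i)\mid\boldsymbol X_i)(\omega)\big|_{\boldsymbol x=\boldsymbol X_i(\omega)}$ (substitution rule), where for fixed $\boldsymbol x$ the instantiation $\widehat\rho(Z(\boldsymbol x,\cdot)\mid\boldsymbol X_i)(\omega)$ is a real-valued risk functional on $\mathcal Z^i_3$. No convexity, monotonicity or homogeneity is required of $\widehat\rho$ (examples: conditional expectation, conditional CVaR, conditional mean-upper-semideviation). Problem (RCL): let $\ell_i:\mathbb R^k\times\mathbb R\to\mathbb R_+$ ($i=0,\dots,m$) be arbitrary (possibly nonconvex, discontinuous) loss functions, $c_i\in\mathbb R$, $\mathcal F$ a set of measurable functions $\boldsymbol f:\mathbb R^d\to\mathbb R^k$, $\widehat\rho_i(\cdot\mid\boldsymbol X_i)$ conditional risk mappings, and $\rho_i:\mathcal L_1(\mathcal D_{\boldsymbol X_i},\mathbb R)\to\mathbb R$ real-valued, convex, lower semicontinuous and positively homogeneous risk measures (equivalently, $\rho_i(Z)=\sup_{\zeta\in\mathbb A_i}\int\zeta Z\,d\mathcal D_{\boldsymbol X_i}$ for a bounded set $\mathbb A_i\subseteq\mathcal L_\infty(\mathcal D_{\boldsymbol X_i},\mathbb R)$). (RCL) is: minimize over $\boldsymbol f\in\mathcal F$ the quantity $\rho_0(\widehat\rho_0(\ell_0(\boldsymbol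 f(\boldsymbol X_0),Y_0)\mid\boldsymbol X_0))$ subject to $\rho_i(\widehat\rho_i(\ell_i(\boldsymbol f(\boldsymbol X_i),Y_i)\mid\boldsymbol X_i))\le c_i$ for $i=1,\dots,m$. $F_i$: for $\boldsymbol z\in\mathbb R^k$ and $\boldsymbol x\in\mathbb R^d$, $F_i(\boldsymbol z,\boldsymbol x)$ denotes the value of $\widehat\rho_i(\ell_i(\boldsymbol z,Y_i)\mid\boldsymbol X_i)$ at $\boldsymbol X_i=\boldsymbol x$, so that by the substitution rule $\widehat\rho_i(\ell_i(\boldsymbol f(\boldsymbol X_i),Y_i)\mid\boldsymbol X_i)=F_i(\boldsymbol f(\boldsymbol X_i),\boldsymbol X_i)$ and $F_i(\boldsymbol f(\cdot),\cdot)\in\mathcal L_p(\mathcal D_{\boldsymbol X_i},\mathbb R)$. A set $\mathcal F$ of measurable functions on $\mathbb R^d$ is decomposable if for all $\boldsymbol f,\boldsymbol g\in\mathcal F$ and every Borel set $E\subseteq\mathbb R^d$, the function $\boldsymbol f\mathbf 1_E+\boldsymbol g\mathbf 1_{E^c}$ belongs to $\mathcal F$. *)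

theory Defs
  imports "HOL-Probability.Probability"
begin

definition memLp :: "'a measure \<Rightarrow> ennreal \<Rightarrow> ('a \<Rightarrow> real) \<Rightarrow> bool" where
  "memLp P p f \<longleftrightarrow> f \<in> borel_measurable P \<and>
     (if p = \<infinity> then (\<exists>C. AE x in P. \<bar>f x\<bar> \<le> C)
      else integrable P (\<lambda>x. \<bar>f x\<bar> powr enn2real p))"

definition nonatomic :: "'a measure \<Rightarrow> bool" where
  "nonatomic P \<longleftrightarrow> (\<forall>E\<in>sets P. 0 < measure P E \<longrightarrow>
      (\<exists>E'\<in>sets P. E' \<subseteq> E \<and> 0 < measure P E' \<and> measure P E' < measure P E))"

definition decomposable :: "('a::topological_space \<Rightarrow> 'b) set \<Rightarrow> bool" where
  "decomposable FF \<longleftrightarrow> (\<forall>f\<in>FF. \<forall>g\<in>FF. \<forall>E\<in>sets borel.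
      (\<lambda>x. if x \<in> E then f x else g x) \<in> FF)"

text \<open>A real-valued (hence proper), convex, lower semicontinuous, positively homogeneous
  functional on L_1(P): it is well defined on equivalence classes, convex and positively
  homogeneous on integrable functions, and lsc with respect to L_1 convergence.\<close>
definition risk_measure_L1 :: "'a measure \<Rightarrow> (('a \<Rightarrow> real) \<Rightarrow> real) \<Rightarrow> bool" where
  "risk_measure_L1 P \<rho> \<longleftrightarrow>
     (\<forall>Z W. integrable P Z \<longrightarrow> integrable P W \<longrightarrow> (AE x in P. Z x = W x) \<longrightarrow> \<rho> Z = \<rho> W) \<and>
     (\<forall>Z W t. integrable P Z \<longrightarrow> integrable P W \<longrightarrow> 0 \<le> t \<longrightarrow> t \<le> 1 \<longrightarrow>
        \<rho> (\<lambda>x. t * Z x + (1 - t) * W x) \<le> t * \<rho> Z + (1 - t) * \<rho> W) \<and>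
     (\<forall>Z t. integrable P Z \<longrightarrow> 0 < t \<longrightarrow> \<rho> (\<lambda>x. t * Z x) = t * \<rho> Z) \<and>
     (\<forall>Z Zs. integrable P Z \<longrightarrow> (\<forall>n. integrable P (Zs n)) \<longrightarrow>
        (\<lambda>n. \<integral>x. \<bar>Zs n x - Z x\<bar> \<partial>P) \<longlonglongrightarrow> 0 \<longrightarrow>
        ereal (\<rho> Z) \<le> liminf (\<lambda>n. ereal (\<rho> (Zs n))))"

text \<open>Conditional risk mapping rhat(. | X) from L_p'(D) (D the law of (X,Y)) to
  L_p(Omega, sigma(X)); an argument Z(X,Y) is represented by the Borel function Z,
  with the substitution rule.\<close>
definition cond_risk_mapping ::
  "'w measure \<Rightarrow> ('w \<Rightarrow> 'x::topological_space) \<Rightarrow> ('w \<Rightarrow> real) \<Rightarrow> ennreal \<Rightarrow> ennreal \<Rightarrow>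
   (('x \<Rightarrow> real \<Rightarrow> real) \<Rightarrow> 'w \<Rightarrow> real) \<Rightarrow> bool" where
  "cond_risk_mapping M X Y p p' rhat \<longleftrightarrow>
     (\<forall>Z. memLp (distr M borel (\<lambda>w. (X w, Y w))) p' (case_prod Z) \<longrightarrow>
        rhat Z \<in> borel_measurable (vimage_algebra (space M) X borel) \<and> memLp M p (rhat Z) \<and>
        (\<forall>w. rhat Z w = rhat (\<lambda>_ y. Z (X w) y) w))"

definition cond_rep :: "'w measure \<Rightarrow> ('w \<Rightarrow> 'x::topological_space) \<Rightarrow> ('w \<Rightarrow> real) \<Rightarrow> ('x \<Rightarrow> real) \<Rightarrow> bool" where
  "cond_rep M X V g \<longleftrightarrow> g \<in> borel_measurable borel \<and> (AE w in M. V w = g (X w))"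

end

theory Submission
  imports Defs
begin

lemma memLp_integrable:
  assumes "prob_space P" "1 \<le> p" "memLp P p f"
  shows "integrable P f"
proof -
  interpret prob_space P by fact
  have fm: "f \<in> borel_measurable P" using assms(3) by (simp add: memLp_def)
  show ?thesis
  proof (cases "p = \<infinity>")
    case True
    then obtain C where C: "AE x in P. \<bar>f x\<bar> \<le> C" using assms(3) by (auto simp: memLp_def)
    show ?thesis
    proof -
      have ic: "integrable P (\<lambda>_. C)" by simp
      show ?thesis by (rule Bochner_Integration.integrable_bound[OF ic fm]) (use C in auto)
    qed
  next
    case False
    let ?q = "enn2real p"
    have q1: "1 \<le> ?q" using assms(2) False
      by (metis enn2real_1 enn2real_mono infinity_ennreal_def less_top)
    have int: "integrable P (\<lambda>x. \<bar>f x\<bar> powr ?q)" using assms(3) False by (simp add: memLp_def)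
    have "integrable P (\<lambda>x. 1 + \<bar>f x\<bar> powr ?q)" using int by simp
    moreover have "\<bar>f x\<bar> \<le> 1 + \<bar>f x\<bar> powr ?q" for x
    proof (cases "\<bar>f x\<bar> \<le> 1")
      case True then show ?thesis by (smt (verit) powr_ge_zero)
    next
      case False
      then have "\<bar>f x\<bar> powr 1 \<le> \<bar>f x\<bar> powr ?q" using q1 by (intro powr_mono) auto
      then show ?thesis using False by simp
    qed
    ultimately show ?thesis
      by (intro Bochner_Integration.integrable_bound[OF _ fm]) (use fm in auto)
  qed
qed

lemma change_measure_risk:
  assumes P0: "prob_space P0" and P1: "prob_space P1" and ss: "sets P1 = sets P0"
    and ac: "absolutely_continuous P0 P1" and r: "risk_measure_L1 P1 r"
  obtains D where "D \<in> borel_measurable P0" "\<And>x. 0 \<le> D x"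
    "P1 = density P0 (\<lambda>x. ennreal (D x))" "AE x in P1. 0 < D x"
    "risk_measure_L1 P0 (\<lambda>W. r (\<lambda>x. if 0 < D x then W x / D x else 0))"
proof -
  interpret P0: prob_space P0 by fact
  interpret P1: prob_space P1 by fact
  have fin: "finite_measure P1" by (simp add: P1.finite_measure_axioms)
  obtain D where Dm: "D \<in> borel_measurable P0"
    and DRN: "AE x in P0. RN_deriv P0 P1 x = ennreal (D x)"
    and Dpos: "AE x in P1. 0 < D x" and Dnn: "\<And>x. 0 \<le> D x"
    using P0.real_RN_deriv[OF fin ac ss] by blast
  have dens: "P1 = density P0 (\<lambda>x. ennreal (D x))"
  proof -
    have "density P0 (\<lambda>x. ennreal (D x)) = density P0 (RN_deriv P0 P1)"
    proof (rule density_cong)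
      show "AE x in P0. ennreal (D x) = RN_deriv P0 P1 x"
        using DRN by (rule eventually_mono) simp
    qed (use Dm in auto)
    also have "\<dots> = P1" by (rule P0.density_RN_deriv[OF ac ss])
    finally show ?thesis by simp
  qed
  define T where "T W = (\<lambda>x. if 0 < D x then W x / D x else 0)" for W :: "'a \<Rightarrow> real"
  have Tm: "T W \<in> borel_measurable P0" if "W \<in> borel_measurable P0" for W
    unfolding T_def using that Dm by measurable
  have Tm1: "T W \<in> borel_measurable P1" if "W \<in> borel_measurable P0" for W
    by (simp only: measurable_cong_sets[OF ss refl] Tm[OF that])
  have DT: "D x * T W x = (if 0 < D x then W x else 0)" for W x
    unfolding T_def by auto
  have intT: "integrable P1 (T W)" if W: "integrable P0 W" for W
  proof -
    have Wm: "W \<in> borel_measurable P0" using W by simp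
    have "integrable P0 (\<lambda>x. D x * T W x)"
      unfolding DT
    proof (rule Bochner_Integration.integrable_bound[OF integrable_abs[OF W]])
      show "(\<lambda>x. if 0 < D x then W x else 0) \<in> borel_measurable P0" using Wm Dm by measurable
      show "AE x in P0. norm (if 0 < D x then W x else 0) \<le> norm \<bar>W x\<bar>"
        by (rule AE_I2) simp
    qed
    then have "integrable (density P0 (\<lambda>x. ennreal (D x))) (T W)"
      by (subst integrable_density[OF Tm[OF Wm] Dm]) (use Dnn in auto)
    then show ?thesis by (simp only: dens[symmetric])
  qed
  have intdiff: "(\<integral>x. \<bar>T W x - T V x\<bar> \<partial>P1) \<le> (\<integral>x. \<bar>W x - V x\<bar> \<partial>P0)"
    if W: "integrable P0 W" and V: "integrable P0 V" for W V
  proof -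
    have Wm: "W \<in> borel_measurable P0" using W by simp
    have Vm: "V \<in> borel_measurable P0" using V by simp
    have m: "(\<lambda>x. \<bar>T W x - T V x\<bar>) \<in> borel_measurable P0" using Tm[OF Wm] Tm[OF Vm] by measurable
    have eq: "D x * \<bar>T W x - T V x\<bar> = (if 0 < D x then \<bar>W x - V x\<bar> else 0)" for x
    proof (cases "0 < D x")
      case True
      have "D x * \<bar>T W x - T V x\<bar> = \<bar>D x * T W x - D x * T V x\<bar>"
        using True by (metis abs_mult abs_of_pos right_diff_distrib)
      then show ?thesis using True by (simp add: DT)
    next
      case False then show ?thesis by (simp add: T_def)
    qed
    have i2: "integrable P0 (\<lambda>x. \<bar>W x - V x\<bar>)" using W V by simp
    have i1: "integrable P0 (\<lambda>x. if 0 < D x then \<bar>W x - V x\<bar> else 0)"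
    proof (rule Bochner_Integration.integrable_bound[OF i2])
      show "(\<lambda>x. if 0 < D x then \<bar>W x - V x\<bar> else 0) \<in> borel_measurable P0" using Wm Vm Dm by measurable
      show "AE x in P0. norm (if 0 < D x then \<bar>W x - V x\<bar> else 0) \<le> norm \<bar>W x - V x\<bar>"
        by (rule AE_I2) simp
    qed
    have "(\<integral>x. \<bar>T W x - T V x\<bar> \<partial>P1) = (\<integral>x. D x * \<bar>T W x - T V x\<bar> \<partial>P0)"
      unfolding dens by (subst integral_density[OF m Dm]) (use Dnn in auto)
    also have "\<dots> = (\<integral>x. (if 0 < D x then \<bar>W x - V x\<bar> else 0) \<partial>P0)"
      by (simp add: eq)
    also have "\<dots> \<le> (\<integral>x. \<bar>W x - V x\<bar> \<partial>P0)"
      by (rule integral_mono[OF i1 i2]) auto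
    finally show ?thesis .
  qed
  note rr = r[unfolded risk_measure_L1_def]
  note rP1_1 = conjunct1[OF rr, rule_format]
  note rP1_2 = conjunct1[OF conjunct2[OF rr], rule_format]
  note rP1_3 = conjunct1[OF conjunct2[OF conjunct2[OF rr]], rule_format]
  note rP1_4 = conjunct2[OF conjunct2[OF conjunct2[OF rr]], rule_format]
  have "risk_measure_L1 P0 (\<lambda>W. r (T W))"
    unfolding risk_measure_L1_def
  proof (intro conjI allI impI)
    fix Z W :: "'a \<Rightarrow> real" assume Z: "integrable P0 Z" and W: "integrable P0 W" and ae: "AE x in P0. Z x = W x"
    have "AE x in P1. T Z x = T W x"
    proof -
      have Dme: "(\<lambda>x. ennreal (D x)) \<in> borel_measurable P0" using Dm by measurable
      show ?thesis unfolding dens AE_density[OF Dme] using ae by (auto simp: T_def elim!: eventually_mono)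
    qed
    then show "r (T Z) = r (T W)" by (intro rP1_1 intT Z W)
  next
    fix Z W :: "'a \<Rightarrow> real" and t :: real assume Z: "integrable P0 Z" and W: "integrable P0 W" and t: "0 \<le> t" "t \<le> 1"
    have "T (\<lambda>x. t * Z x + (1 - t) * W x) = (\<lambda>x. t * T Z x + (1 - t) * T W x)"
      by (auto simp: T_def add_divide_distrib)
    then show "r (T (\<lambda>x. t * Z x + (1 - t) * W x)) \<le> t * r (T Z) + (1 - t) * r (T W)"
      using rP1_2[OF intT[OF Z] intT[OF W] t] by simp
  next
    fix Z :: "'a \<Rightarrow> real" and t :: real assume Z: "integrable P0 Z" and t: "0 < t"
    have "T (\<lambda>x. t * Z x) = (\<lambda>x. t * T Z x)" by (auto simp: T_def)
    then show "r (T (\<lambda>x. t * Z x)) = t * r (T Z)" using rP1_3[OF intT[OF Z] t] by simp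
  next
    fix Z :: "'a \<Rightarrow> real" and Zs assume Z: "integrable P0 Z" and Zs: "\<forall>n. integrable P0 (Zs n)"
      and lim: "(\<lambda>n. \<integral>x. \<bar>Zs n x - Z x\<bar> \<partial>P0) \<longlonglongrightarrow> 0"
    have "(\<lambda>n. \<integral>x. \<bar>T (Zs n) x - T Z x\<bar> \<partial>P1) \<longlonglongrightarrow> 0"
    proof (rule Lim_null_comparison[OF _ lim])
      show "\<forall>\<^sub>F n in sequentially. norm (\<integral>x. \<bar>T (Zs n) x - T Z x\<bar> \<partial>P1) \<le> (\<integral>x. \<bar>Zs n x - Z x\<bar> \<partial>P0)"
        using intdiff[OF spec[OF Zs] Z] by (simp add: integral_nonneg_AE)
    qed
    then show "ereal (r (T Z)) \<le> liminf (\<lambda>n. ereal (r (T (Zs n))))"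
      using rP1_4[of "T Z" "\<lambda>n. T (Zs n)"] intT Z Zs by blast
  qed
  then show ?thesis unfolding T_def by (rule that[OF Dm Dnn dens Dpos])
qed

theorem theorem2:
  fixes M :: "'w measure"
    and X :: "nat \<Rightarrow> 'w \<Rightarrow> real^'d"
    and Y :: "nat \<Rightarrow> 'w \<Rightarrow> real"
    and m :: nat and p p' :: ennreal
    and rhat :: "nat \<Rightarrow> (real^'d \<Rightarrow> real \<Rightarrow> real) \<Rightarrow> 'w \<Rightarrow> real"
    and loss :: "nat \<Rightarrow> real^'k \<Rightarrow> real \<Rightarrow> real"
    and F :: "nat \<Rightarrow> real^'k \<Rightarrow> real^'d \<Rightarrow> real"
    and FF :: "(real^'d \<Rightarrow> real^'k) set"
    and \<rho> :: "nat \<Rightarrow> (real^'d \<Rightarrow> real) \<Rightarrow> real"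
    and c :: "nat \<Rightarrow> real"
  assumes prob: "prob_space M" and compl: "complete_measure M"
    and XY_meas: "\<And>i. i \<le> m \<Longrightarrow> X i \<in> borel_measurable M \<and> Y i \<in> borel_measurable M"
    and pp': "1 \<le> p" "1 \<le> p'"
    and loss_nonneg: "\<And>i z y. i \<le> m \<Longrightarrow> 0 \<le> loss i z y"
    and FF_meas: "\<And>f. f \<in> FF \<Longrightarrow> f \<in> borel_measurable borel"
    and crm: "\<And>i. i \<le> m \<Longrightarrow> cond_risk_mapping M (X i) (Y i) p p' (rhat i)"
    and F_def: "\<And>i z w. i \<le> m \<Longrightarrow> F i z (X i w) = rhat i (\<lambda>_ y. loss i z y) w"
    and F_Lp: "\<And>i f. i \<le> m \<Longrightarrow> f \<in> FF \<Longrightarrow> memLp (distr M borel (X i)) p (\<lambda>x. F i (f x) x)"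
    and rho: "\<And>i. i \<le> m \<Longrightarrow> risk_measure_L1 (distr M borel (X i)) (\<rho> i)"
    and A1_ac: "\<And>i. 1 \<le> i \<Longrightarrow> i \<le> m \<Longrightarrow>
                   absolutely_continuous (distr M borel (X 0)) (distr M borel (X i))"
    and A1_na: "nonatomic (distr M borel (X 0))"
    and A2_Lp: "\<And>i f. i \<le> m \<Longrightarrow> f \<in> FF \<Longrightarrow>
                   memLp (distr M borel (\<lambda>w. (X i w, Y i w))) p' (\<lambda>(x, y). loss i (f x) y)"
    and A2_dec: "decomposable FF"
  shows "(\<forall>f\<in>FF. \<forall>g. cond_rep M (X 0) (rhat 0 (\<lambda>x y. loss 0 (f x) y)) g \<longrightarrow>
                      \<rho> 0 g = \<rho> 0 (\<lambda>x. F 0 (f x) x)) \<and>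
         (\<exists>rhot :: nat \<Rightarrow> (real^'d \<Rightarrow> real) \<Rightarrow> real. \<exists>G :: nat \<Rightarrow> real^'k \<Rightarrow> real^'d \<Rightarrow> real.
            (\<forall>i\<in>{1..m}.
               risk_measure_L1 (distr M borel (X 0)) (rhot i) \<and>
               (\<forall>f\<in>FF. integrable (distr M borel (X 0)) (\<lambda>x. G i (f x) x)) \<and>
               (\<forall>f\<in>FF. \<forall>g. cond_rep M (X i) (rhat i (\<lambda>x y. loss i (f x) y)) g \<longrightarrow>
                      \<rho> i g = rhot i (\<lambda>x. G i (f x) x))) \<and>
            (\<forall>f\<in>FF. (\<forall>i\<in>{1..m}. \<forall>g. cond_rep M (X i) (rhat i (\<lambda>x y. loss i (f x) y)) g \<longrightarrow>
                                     \<rho> i g \<le> c i) \<longleftrightarrow>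
                     (\<forall>i\<in>{1..m}. rhot i (\<lambda>x. G i (f x) x) \<le> c i)))"
proof -
  define \<mu> where "\<mu> i = distr M borel (X i)" for i
  have Xm: "X i \<in> borel_measurable M" if "i \<le> m" for i using XY_meas[OF that] by simp
  have Pmu: "prob_space (\<mu> i)" if "i \<le> m" for i
    unfolding \<mu>_def by (rule prob_space.prob_space_distr[OF prob Xm[OF that]])
  have smu: "sets (\<mu> i) = sets borel" for i unfolding \<mu>_def by simp
  have sub: "rhat i (\<lambda>x y. loss i (f x) y) w = F i (f (X i w)) (X i w)"
    if i: "i \<le> m" and f: "f \<in> FF" for i f w
  proof -
    have c: "memLp (distr M borel (\<lambda>w. (X i w, Y i w))) p' (case_prod (\<lambda>x y. loss i (f x) y))"
      using A2_Lp[OF i f] by simp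
    have "rhat i (\<lambda>x y. loss i (f x) y) w = rhat i (\<lambda>_ y. loss i (f (X i w)) y) w"
      using conjunct2[OF conjunct2[OF crm[OF i, unfolded cond_risk_mapping_def, rule_format, OF c]]]
      by (rule spec)
    also have "\<dots> = F i (f (X i w)) (X i w)" using F_def[OF i, of "f (X i w)" w] by simp
    finally show ?thesis .
  qed
  have Fint: "integrable (\<mu> i) (\<lambda>x. F i (f x) x)" if i: "i \<le> m" and f: "f \<in> FF" for i f
    using memLp_integrable[OF Pmu[OF i] pp'(1)] F_Lp[OF i f] unfolding \<mu>_def by blast
  have Fm: "(\<lambda>x. F i (f x) x) \<in> borel_measurable borel" if i: "i \<le> m" and f: "f \<in> FF" for i f
  proof -
    have "(\<lambda>x. F i (f x) x) \<in> borel_measurable (\<mu> i)" using Fint[OF i f] by simp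
    then show ?thesis by (simp only: measurable_cong_sets[OF smu refl])
  qed
  have rwd: "\<rho> i Z = \<rho> i W" if i: "i \<le> m" and "integrable (\<mu> i) Z" "integrable (\<mu> i) W"
     "AE x in \<mu> i. Z x = W x" for i Z W
    by (rule conjunct1[OF rho[OF i, unfolded risk_measure_L1_def], rule_format])
       (use that[unfolded \<mu>_def] in auto)
  have crep: "\<rho> i g = \<rho> i (\<lambda>x. F i (f x) x)"
    if i: "i \<le> m" and f: "f \<in> FF" and g: "cond_rep M (X i) (rhat i (\<lambda>x y. loss i (f x) y)) g" for i f g
  proof -
    have gm: "g \<in> borel_measurable borel" and ae: "AE w in M. rhat i (\<lambda>x y. loss i (f x) y) w = g (X i w)"
      using g unfolding cond_rep_def by auto
    have ae2: "AE w in M. g (X i w) = F i (f (X i w)) (X i w)"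
      using ae by (rule eventually_mono) (simp add: sub[OF i f])
    have setm: "{x \<in> space borel. g x = F i (f x) x} \<in> sets borel"
      using gm Fm[OF i f] by measurable
    have ae3: "AE x in \<mu> i. g x = F i (f x) x"
      unfolding \<mu>_def using AE_distr_iff[OF Xm[OF i] setm] ae2 by simp
    have gm': "g \<in> borel_measurable (\<mu> i)" using gm by (simp only: measurable_cong_sets[OF smu refl])
    have gi: "integrable (\<mu> i) g"
      by (rule integrable_cong_AE_imp[OF Fint[OF i f] gm']) (use ae3 in \<open>auto elim: eventually_mono\<close>)
    show ?thesis by (rule rwd[OF i gi Fint[OF i f] ae3])
  qed
  have gex: "cond_rep M (X i) (rhat i (\<lambda>x y. loss i (f x) y)) (\<lambda>x. F i (f x) x)"
    if i: "i \<le> m" and f: "f \<in> FF" for i f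
    unfolding cond_rep_def using Fm[OF i f] sub[OF i f] by simp
  have part1: "\<forall>f\<in>FF. \<forall>g. cond_rep M (X 0) (rhat 0 (\<lambda>x y. loss 0 (f x) y)) g \<longrightarrow>
                      \<rho> 0 g = \<rho> 0 (\<lambda>x. F 0 (f x) x)"
    using crep[of 0] by blast
  have "\<forall>i\<in>{1..m}. \<exists>D. D \<in> borel_measurable (\<mu> 0) \<and> (\<forall>x. 0 \<le> D x) \<and>
    \<mu> i = density (\<mu> 0) (\<lambda>x. ennreal (D x)) \<and> (AE x in \<mu> i. 0 < D x) \<and>
    risk_measure_L1 (\<mu> 0) (\<lambda>W. \<rho> i (\<lambda>x. if 0 < D x then W x / D x else 0))"
  proof
    fix i assume "i \<in> {1..m}"
    then have i: "i \<le> m" "1 \<le> i" by auto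
    obtain D where "D \<in> borel_measurable (\<mu> 0)" "\<And>x. 0 \<le> D x"
      "\<mu> i = density (\<mu> 0) (\<lambda>x. ennreal (D x))" "AE x in \<mu> i. 0 < D x"
      "risk_measure_L1 (\<mu> 0) (\<lambda>W. \<rho> i (\<lambda>x. if 0 < D x then W x / D x else 0))"
      by (rule change_measure_risk[OF Pmu[of 0] Pmu[OF i(1)]])
         (use i A1_ac[OF i(2) i(1)] rho[OF i(1)] smu in \<open>auto simp: \<mu>_def\<close>)
    then show "\<exists>D. D \<in> borel_measurable (\<mu> 0) \<and> (\<forall>x. 0 \<le> D x) \<and>
      \<mu> i = density (\<mu> 0) (\<lambda>x. ennreal (D x)) \<and> (AE x in \<mu> i. 0 < D x) \<and>
      risk_measure_L1 (\<mu> 0) (\<lambda>W. \<rho> i (\<lambda>x. if 0 < D x then W x / D x else 0))"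
      by blast
  qed
  from bchoice[OF this] obtain D where D0: "\<forall>i\<in>{1..m}. D i \<in> borel_measurable (\<mu> 0) \<and> (\<forall>x. 0 \<le> D i x) \<and>
    \<mu> i = density (\<mu> 0) (\<lambda>x. ennreal (D i x)) \<and> (AE x in \<mu> i. 0 < D i x) \<and>
    risk_measure_L1 (\<mu> 0) (\<lambda>W. \<rho> i (\<lambda>x. if 0 < D i x then W x / D i x else 0))"
    by blast
  note D = D0[rule_format]
  define rhot where "rhot i W = \<rho> i (\<lambda>x. if 0 < D i x then W x / D i x else 0)" for i W
  define G where "G i z x = F i z x * D i x" for i z x
  have Gint: "integrable (\<mu> 0) (\<lambda>x. G i (f x) x)" if i: "i \<in> {1..m}" and f: "f \<in> FF" for i f
  proof -
    have im: "i \<le> m" using i by auto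
    have Dm: "D i \<in> borel_measurable (\<mu> 0)" and Dnn: "\<And>x. 0 \<le> D i x"
      and dens: "\<mu> i = density (\<mu> 0) (\<lambda>x. ennreal (D i x))" using D[OF i] by auto
    have Fm0: "(\<lambda>x. F i (f x) x) \<in> borel_measurable (\<mu> 0)"
      using Fm[OF im f] by (simp only: measurable_cong_sets[OF smu refl])
    have "integrable (density (\<mu> 0) (\<lambda>x. ennreal (D i x))) (\<lambda>x. F i (f x) x)"
      using Fint[OF im f] by (simp only: dens)
    then have "integrable (\<mu> 0) (\<lambda>x. D i x *\<^sub>R F i (f x) x)"
      by (subst (asm) integrable_density[OF Fm0 Dm]) (use Dnn in auto)
    then show ?thesis unfolding G_def by (simp add: mult.commute)
  qed
  have eqG: "\<rho> i g = rhot i (\<lambda>x. G i (f x) x)"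
    if i: "i \<in> {1..m}" and f: "f \<in> FF" and g: "cond_rep M (X i) (rhat i (\<lambda>x y. loss i (f x) y)) g" for i f g
  proof -
    have im: "i \<le> m" using i by auto
    have Dm: "D i \<in> borel_measurable (\<mu> 0)" and Dpos: "AE x in \<mu> i. 0 < D i x"
      using D[OF i] by auto
    have Dm': "D i \<in> borel_measurable (\<mu> i)" using Dm by (simp only: measurable_cong_sets[OF smu refl] measurable_cong_sets[OF smu[of 0] refl])
    have Fmi: "(\<lambda>x. F i (f x) x) \<in> borel_measurable (\<mu> i)"
      using Fm[OF im f] by (simp only: measurable_cong_sets[OF smu refl])
    let ?H = "\<lambda>x. if 0 < D i x then G i (f x) x / D i x else 0"
    have ae: "AE x in \<mu> i. F i (f x) x = ?H x"
      using Dpos by (rule eventually_mono) (simp add: G_def)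
    have Hm: "?H \<in> borel_measurable (\<mu> i)" unfolding G_def using Fmi Dm' by measurable
    have Hi: "integrable (\<mu> i) ?H" by (rule integrable_cong_AE_imp[OF Fint[OF im f] Hm ae])
    have "\<rho> i g = \<rho> i (\<lambda>x. F i (f x) x)" by (rule crep[OF im f g])
    also have "\<dots> = \<rho> i ?H" by (rule rwd[OF im Fint[OF im f] Hi ae])
    finally show ?thesis unfolding rhot_def .
  qed
  have part2: "(\<forall>i\<in>{1..m}.
               risk_measure_L1 (distr M borel (X 0)) (rhot i) \<and>
               (\<forall>f\<in>FF. integrable (distr M borel (X 0)) (\<lambda>x. G i (f x) x)) \<and>
               (\<forall>f\<in>FF. \<forall>g. cond_rep M (X i) (rhat i (\<lambda>x y. loss i (f x) y)) g \<longrightarrow>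
                      \<rho> i g = rhot i (\<lambda>x. G i (f x) x)))"
  proof (intro ballI conjI allI impI)
    fix i assume i: "i \<in> {1..m}"
    show "risk_measure_L1 (distr M borel (X 0)) (rhot i)"
      using D[OF i] unfolding rhot_def \<mu>_def by (simp add: fun_eq_iff)
    show "\<And>f. f \<in> FF \<Longrightarrow> integrable (distr M borel (X 0)) (\<lambda>x. G i (f x) x)"
      using Gint[OF i] unfolding \<mu>_def by blast
    show "\<And>f g. f \<in> FF \<Longrightarrow> cond_rep M (X i) (rhat i (\<lambda>x y. loss i (f x) y)) g \<Longrightarrow>
                      \<rho> i g = rhot i (\<lambda>x. G i (f x) x)"
      using eqG[OF i] by blast
  qed
  have part3: "\<forall>f\<in>FF. (\<forall>i\<in>{1..m}. \<forall>g. cond_rep M (X i) (rhat i (\<lambda>x y. loss i (f x) y)) g \<longrightarrow>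
                                     \<rho> i g \<le> c i) \<longleftrightarrow>
                     (\<forall>i\<in>{1..m}. rhot i (\<lambda>x. G i (f x) x) \<le> c i)"
  proof (rule ballI)
    fix f assume f: "f \<in> FF"
    show "(\<forall>i\<in>{1..m}. \<forall>g. cond_rep M (X i) (rhat i (\<lambda>x y. loss i (f x) y)) g \<longrightarrow>
                                     \<rho> i g \<le> c i) \<longleftrightarrow>
                     (\<forall>i\<in>{1..m}. rhot i (\<lambda>x. G i (f x) x) \<le> c i)"
    proof
      assume H: "\<forall>i\<in>{1..m}. \<forall>g. cond_rep M (X i) (rhat i (\<lambda>x y. loss i (f x) y)) g \<longrightarrow> \<rho> i g \<le> c i"
      show "\<forall>i\<in>{1..m}. rhot i (\<lambda>x. G i (f x) x) \<le> c i"
      proof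
        fix i assume i: "i \<in> {1..m}"
        have im: "i \<le> m" using i by auto
        have "\<rho> i (\<lambda>x. F i (f x) x) \<le> c i" using H i gex[OF im f] by blast
        then show "rhot i (\<lambda>x. G i (f x) x) \<le> c i" using eqG[OF i f gex[OF im f]] by simp
      qed
    next
      assume H: "\<forall>i\<in>{1..m}. rhot i (\<lambda>x. G i (f x) x) \<le> c i"
      show "\<forall>i\<in>{1..m}. \<forall>g. cond_rep M (X i) (rhat i (\<lambda>x y. loss i (f x) y)) g \<longrightarrow> \<rho> i g \<le> c i"
        using H eqG[OF _ f] by auto
    qed
  qed
  show ?thesis using part1 part2 part3 by blast
qed

end
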